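(* Let $G$ be a finite simple graph with vertex set $V(G)=\{1,\dots,m\}$ and let $\vec p\in \mathrm{STAB}(G)\cup \mathrm{TH}(G)$. Then for every integer $n\ge 1$, the vector $\vec p^{\,\otimes n}\in[0,1]^{V(G)^n}$, with entries $(\vec p^{\,\otimes n})_{(i_1,\dots,i_n)}=p_{i_1}p_{i_2}\cdots p_{i_n}$, satisfies $$\sum_{(i_1,\dots,i_n)\in C} p_{i_1}\cdots p_{i_n}\le 1$$ for every clique $C$ of the graph $G^{\ast n}$. In other words, $\vec p^{\,\otimes n}\in \mathrm{QSTAB}(G^{\ast n})$ for all $n\ge 1$; that is, the classical and the quantum probability assignments for $G$ are self-consistent.
   Context: Graphs are finite and simple; a clique is a set of pairwise adjacent vertices. $\mathrm{STAB}(G)$ is the convex hull of the vectors $\vec p\in\{0,1\}^{V(G)}$ such that $p_ip_j=0$ whenever $\{i,j\}$ is an edge of $G$; this is the set of classical probability assignments for $G$. $\mathrm{TH}(G)$ is the set of vectors $\vec p\in[0,1]^{V(G)}$ for which there exist a finite-dimensional inner product space $\mathcal V$ and unit vectors $\psi, u_1,\dots,u_m\in\mathcal V$ with $\langle u_i,u_j\rangle=0$ for every edge $\{i,j\}$ of $G$ and $p_i=|\langle u_i,\psi\rangle|^2$ for all $i$; this is the set of quantum probability assignments for $G$. $\mathrm{QSTAB}(H)$ is the set of $\vec q\in[0,1]^{V(H)}$ with $\sum_{v\in C}q_v\le 1$ for every clique $C$ of $H$. The OR product $G\ast G'$ has vertex set $V(G)\times V(G')$, with $(i,i')$ and $(j,j')$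 adjacent iff $\{i,j\}\in E(G)$ or $\{i',j'\}\in E(G')$. $G^{\ast n}$ is the OR product of $n$ copies of $G$. A probability assignment $\vec p$ for $G$ is called self-consistent if $\vec p^{\,\otimes n}\in\mathrm{QSTAB}(G^{\ast n})$ for every $n\ge1$. *)

theory Defs
  imports "HOL-Analysis.Analysis"
begin

definition simple_graph :: "nat \<Rightarrow> (nat \<Rightarrow> nat \<Rightarrow> bool) \<Rightarrow> bool" where
  "simple_graph m E \<longleftrightarrow>
     (\<forall>i j. E i j \<longrightarrow> i \<in> {1..m} \<and> j \<in> {1..m}) \<and>
     (\<forall>i j. E i j \<longrightarrow> E j i) \<and> (\<forall>i. \<not> E i i)"

text \<open>Independent (stable) sets; their indicator vectors are exactly the 0/1 vectors
p with p_i p_j = 0 on every edge.\<close>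
definition indep :: "nat \<Rightarrow> (nat \<Rightarrow> nat \<Rightarrow> bool) \<Rightarrow> nat set \<Rightarrow> bool" where
  "indep m E S \<longleftrightarrow> S \<subseteq> {1..m} \<and> (\<forall>i\<in>S. \<forall>j\<in>S. \<not> E i j)"

text \<open>STAB(G): convex hull of the (finitely many) stable-set indicator vectors,
written as explicit convex combinations; vectors are indexed by V = {1..m}.\<close>
definition in_STAB :: "nat \<Rightarrow> (nat \<Rightarrow> nat \<Rightarrow> bool) \<Rightarrow> (nat \<Rightarrow> real) \<Rightarrow> bool" where
  "in_STAB m E p \<longleftrightarrow>
     (\<exists>w :: nat set \<Rightarrow> real.
        (\<forall>S. indep m E S \<longrightarrow> 0 \<le> w S) \<and>
        (\<Sum>S\<in>{S. indep m E S}. w S) = 1 \<and>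
        (\<forall>i\<in>{1..m}. p i = (\<Sum>S\<in>{S. indep m E S}. w S * indicator S i)))"

text \<open>Standard inner product on C^d (conjugate-linear in the first argument); every
finite-dimensional inner product space is isometric to some C^d.\<close>
definition cinner :: "nat \<Rightarrow> (nat \<Rightarrow> complex) \<Rightarrow> (nat \<Rightarrow> complex) \<Rightarrow> complex" where
  "cinner d x y = (\<Sum>k<d. cnj (x k) * y k)"

definition in_TH :: "nat \<Rightarrow> (nat \<Rightarrow> nat \<Rightarrow> bool) \<Rightarrow> (nat \<Rightarrow> real) \<Rightarrow> bool" where
  "in_TH m E p \<longleftrightarrow>
     (\<forall>i\<in>{1..m}. 0 \<le> p i \<and> p i \<le> 1) \<and>
     (\<exists>(d::nat) (\<psi>::nat \<Rightarrow> complex) (u::nat \<Rightarrow> nat \<Rightarrow> complex).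
        cinner d \<psi> \<psi> = 1 \<and>
        (\<forall>i\<in>{1..m}. cinner d (u i) (u i) = 1) \<and>
        (\<forall>i\<in>{1..m}. \<forall>j\<in>{1..m}. E i j \<longrightarrow> cinner d (u i) (u j) = 0) \<and>
        (\<forall>i\<in>{1..m}. p i = (cmod (cinner d (u i) \<psi>))\<^sup>2))"

definition is_clique :: "'a set \<Rightarrow> ('a \<Rightarrow> 'a \<Rightarrow> bool) \<Rightarrow> 'a set \<Rightarrow> bool" where
  "is_clique V A C \<longleftrightarrow> C \<subseteq> V \<and> (\<forall>x\<in>C. \<forall>y\<in>C. x \<noteq> y \<longrightarrow> A x y)"

definition QSTAB :: "'a set \<Rightarrow> ('a \<Rightarrow> 'a \<Rightarrow> bool) \<Rightarrow> ('a \<Rightarrow> real) set" where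
  "QSTAB V A = {q. (\<forall>v\<in>V. 0 \<le> q v \<and> q v \<le> 1) \<and>
                   (\<forall>C. is_clique V A C \<longrightarrow> (\<Sum>v\<in>C. q v) \<le> 1)}"

definition or_pow_verts :: "nat \<Rightarrow> nat \<Rightarrow> nat list set" where
  "or_pow_verts m n = {xs. length xs = n \<and> set xs \<subseteq> {1..m}}"

definition or_pow_adj :: "(nat \<Rightarrow> nat \<Rightarrow> bool) \<Rightarrow> nat list \<Rightarrow> nat list \<Rightarrow> bool" where
  "or_pow_adj E xs ys \<longleftrightarrow> (\<exists>k < min (length xs) (length ys). E (xs ! k) (ys ! k))"

definition tensor_pow :: "(nat \<Rightarrow> real) \<Rightarrow> nat list \<Rightarrow> real" where
  "tensor_pow p xs = prod_list (map p xs)"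

end

theory Submission
  imports Defs
begin

definition inn :: "'i set \<Rightarrow> ('i \<Rightarrow> complex) \<Rightarrow> ('i \<Rightarrow> complex) \<Rightarrow> complex" where
  "inn I a b = (\<Sum>k\<in>I. cnj (a k) * b k)"

lemma inn_swap: "inn I b a = cnj (inn I a b)"
  unfolding inn_def by (simp add: mult.commute)

lemma inn_self_real: "inn I a a = complex_of_real (\<Sum>k\<in>I. (cmod (a k))\<^sup>2)"
  unfolding inn_def of_real_sum by (intro sum.cong refl) (metis complex_norm_square mult.commute of_real_power)

lemma inn_diff_left: "inn I (\<lambda>k. a k - b k) c = inn I a c - inn I b c"
  unfolding inn_def by (simp add: algebra_simps sum_subtractf)

lemma inn_diff_right: "inn I c (\<lambda>k. a k - b k) = inn I c a - inn I c b"
  unfolding inn_def by (simp add: algebra_simps sum_subtractf)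

lemma inn_sum_right:
  "inn I x (\<lambda>k. \<Sum>c\<in>C. f c * e c k) = (\<Sum>c\<in>C. f c * inn I x (e c))"
  unfolding inn_def by (simp add: sum_distrib_left sum_distrib_right algebra_simps sum.swap[of _ I])

lemma inn_sum_left:
  "inn I (\<lambda>k. \<Sum>c\<in>C. f c * e c k) y = (\<Sum>c\<in>C. cnj (f c) * inn I (e c) y)"
  unfolding inn_def by (simp add: cnj_sum sum_distrib_left sum_distrib_right algebra_simps sum.swap[of _ I])

lemma bessel:
  assumes fC: "finite C"
    and on: "\<And>a b. a \<in> C \<Longrightarrow> b \<in> C \<Longrightarrow> inn I (e a) (e b) = (if a = b then 1 else 0)"
  shows "(\<Sum>c\<in>C. (cmod (inn I (e c) \<psi>))\<^sup>2) \<le> Re (inn I \<psi> \<psi>)"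
proof -
  define a where "a c = inn I (e c) \<psi>" for c
  define v where "v k = (\<Sum>c\<in>C. a c * e c k)" for k
  define \<phi> where "\<phi> k = \<psi> k - v k" for k
  have vv: "inn I v v = (\<Sum>c\<in>C. cnj (a c) * a c)"
  proof -
    have "inn I v v = (\<Sum>c\<in>C. cnj (a c) * inn I (e c) v)"
      unfolding v_def[abs_def] by (rule inn_sum_left)
    also have "\<dots> = (\<Sum>c\<in>C. cnj (a c) * (\<Sum>c'\<in>C. a c' * inn I (e c) (e c')))"
      unfolding v_def[abs_def] by (simp add: inn_sum_right)
    also have "\<dots> = (\<Sum>c\<in>C. cnj (a c) * (\<Sum>c'\<in>C. if c = c' then a c' else 0))"
      by (intro sum.cong refl arg_cong2[where f="(*)"]) (auto simp: on)
    also have "\<dots> = (\<Sum>c\<in>C. cnj (a c) * a c)"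
      using fC by (intro sum.cong refl) (simp add: sum.delta)
    finally show ?thesis .
  qed
  have vpsi: "inn I v \<psi> = (\<Sum>c\<in>C. cnj (a c) * a c)"
    unfolding v_def[abs_def] by (simp add: inn_sum_left a_def)
  have psiv: "inn I \<psi> v = (\<Sum>c\<in>C. cnj (a c) * a c)"
    using vpsi inn_swap[of I \<psi> v] by (simp add: cnj_sum mult.commute)
  have "inn I \<phi> \<phi> = inn I \<psi> \<psi> - inn I \<psi> v - inn I v \<psi> + inn I v v"
    unfolding \<phi>_def[abs_def] by (simp add: inn_diff_left inn_diff_right)
  also have "\<dots> = inn I \<psi> \<psi> - (\<Sum>c\<in>C. cnj (a c) * a c)"
    using vv vpsi psiv by simp
  finally have eq: "inn I \<phi> \<phi> = inn I \<psi> \<psi> - (\<Sum>c\<in>C. cnj (a c) * a c)" .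
  have "0 \<le> Re (inn I \<phi> \<phi>)"
    by (simp add: inn_self_real sum_nonneg)
  moreover have "Re (\<Sum>c\<in>C. cnj (a c) * a c) = (\<Sum>c\<in>C. (cmod (a c))\<^sup>2)"
    by (simp, intro sum.cong refl) (metis cmod_power2 power2_eq_square)
  ultimately show ?thesis using eq by (simp add: a_def)
qed

lemma sum_PiE_prod:
  "(\<Sum>g\<in>PiE {..<n::nat} (\<lambda>_. {..<d::nat}). \<Prod>k<n. f k (g k)) = (\<Prod>k<n. \<Sum>j<d. (f k j :: 'c::comm_semiring_1))"
  by (rule prod_sum_PiE[symmetric]) auto

lemma verts_nth: "xs \<in> or_pow_verts m n \<Longrightarrow> k < n \<Longrightarrow> xs ! k \<in> {1..m}"
  unfolding or_pow_verts_def by (auto simp: subset_iff)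

lemma verts_len: "xs \<in> or_pow_verts m n \<Longrightarrow> length xs = n"
  unfolding or_pow_verts_def by auto

lemma tp_eq: "xs \<in> or_pow_verts m n \<Longrightarrow> tensor_pow p xs = (\<Prod>k<n. p (xs ! k))"
  unfolding tensor_pow_def prod.list_conv_set_nth
  by (auto simp: verts_len atLeast0LessThan intro!: prod.cong)

lemma finite_verts: "finite (or_pow_verts m n)"
proof -
  have "or_pow_verts m n = {xs. set xs \<subseteq> {1..m} \<and> length xs = n}"
    unfolding or_pow_verts_def by auto
  then show ?thesis using finite_lists_length_eq[of "{1..m}" n] by simp
qed

lemma th_clique:
  assumes psi: "cinner d \<psi> \<psi> = 1"
    and u1: "\<forall>i\<in>{1..m}. cinner d (u i) (u i) = 1"
    and u0: "\<forall>i\<in>{1..m}. \<forall>j\<in>{1..m}. E i j \<longrightarrow> cinner d (u i) (u j) = 0"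
    and cl: "is_clique (or_pow_verts m n) (or_pow_adj E) C"
  shows "(\<Sum>xs\<in>C. \<Prod>k<n. (cmod (cinner d (u (xs ! k)) \<psi>))\<^sup>2) \<le> 1"
proof -
  define I where "I = PiE {..<n} (\<lambda>_. {..<d})"
  define e where "e xs g = (\<Prod>k<n. u (xs ! k) (g k))" for xs g
  define \<Psi> where "\<Psi> g = (\<Prod>k<n. \<psi> (g k))" for g
  have CV: "C \<subseteq> or_pow_verts m n" using cl unfolding is_clique_def by auto
  have fC: "finite C" using CV finite_verts finite_subset by blast
  have key: "inn I (\<lambda>g. \<Prod>k<n. a k (g k)) (\<lambda>g. \<Prod>k<n. b k (g k)) = (\<Prod>k<n. cinner d (a k) (b k))"
    for a b
  proof -
    have "inn I (\<lambda>g. \<Prod>k<n. a k (g k)) (\<lambda>g. \<Prod>k<n. b k (g k))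
        = (\<Sum>g\<in>I. \<Prod>k<n. cnj (a k (g k)) * b k (g k))"
      unfolding inn_def by (simp add: cnj_prod prod.distrib)
    also have "\<dots> = (\<Prod>k<n. \<Sum>j<d. cnj (a k j) * b k j)"
      unfolding I_def by (rule sum_PiE_prod)
    finally show ?thesis by (simp add: cinner_def)
  qed
  have on: "inn I (e xs) (e ys) = (if xs = ys then 1 else 0)" if "xs \<in> C" "ys \<in> C" for xs ys
  proof -
    have xv: "xs \<in> or_pow_verts m n" and yv: "ys \<in> or_pow_verts m n" using that CV by auto
    have eq: "inn I (e xs) (e ys) = (\<Prod>k<n. cinner d (u (xs ! k)) (u (ys ! k)))"
      unfolding e_def[abs_def] by (rule key)
    show ?thesis
    proof (cases "xs = ys")
      case True
      then show ?thesis using eq u1 verts_nth[OF xv] by simp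
    next
      case False
      then have "or_pow_adj E xs ys" using cl that unfolding is_clique_def by auto
      then obtain k where k: "k < n" "E (xs ! k) (ys ! k)"
        unfolding or_pow_adj_def using verts_len[OF xv] verts_len[OF yv] by auto
      then have "cinner d (u (xs ! k)) (u (ys ! k)) = 0"
        using u0 verts_nth[OF xv k(1)] verts_nth[OF yv k(1)] by auto
      then have "(\<Prod>k<n. cinner d (u (xs ! k)) (u (ys ! k))) = 0"
        using k(1) by (intro prod_zero) auto
      then show ?thesis using eq False by simp
    qed
  qed
  have b: "(\<Sum>xs\<in>C. (cmod (inn I (e xs) \<Psi>))\<^sup>2) \<le> Re (inn I \<Psi> \<Psi>)"
    by (rule bessel[OF fC on])
  have "inn I \<Psi> \<Psi> = (\<Prod>k<n. cinner d \<psi> \<psi>)"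
    unfolding \<Psi>_def[abs_def] by (rule key)
  then have pp: "inn I \<Psi> \<Psi> = 1" using psi by simp
  have "(cmod (inn I (e xs) \<Psi>))\<^sup>2 = (\<Prod>k<n. (cmod (cinner d (u (xs ! k)) \<psi>))\<^sup>2)" for xs
  proof -
    have "inn I (e xs) \<Psi> = (\<Prod>k<n. cinner d (u (xs ! k)) \<psi>)"
      unfolding e_def[abs_def] \<Psi>_def[abs_def] by (rule key)
    then show ?thesis by (simp add: prod_norm[symmetric] prod_power_distrib)
  qed
  then show ?thesis using b pp by simp
qed

lemma stab_clique:
  assumes sg: "simple_graph m E"
    and w0: "\<forall>S. indep m E S \<longrightarrow> 0 \<le> w S"
    and w1: "(\<Sum>S\<in>{S. indep m E S}. w S) = 1"
    and cl: "is_clique (or_pow_verts m n) (or_pow_adj E) C"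
  shows "(\<Sum>xs\<in>C. \<Prod>k<n. (\<Sum>S\<in>{S. indep m E S}. w S * indicator S (xs ! k))) \<le> (1::real)"
proof -
  define Ind where "Ind = {S. indep m E S}"
  have fI: "finite Ind"
  proof -
    have "Ind \<subseteq> Pow {1..m}" unfolding Ind_def indep_def by auto
    then show ?thesis using finite_subset by blast
  qed
  define F where "F = PiE {..<n} (\<lambda>_. Ind)"
  have fF: "finite F" unfolding F_def using fI by (simp add: finite_PiE)
  have CV: "C \<subseteq> or_pow_verts m n" using cl unfolding is_clique_def by auto
  have fC: "finite C" using CV finite_verts finite_subset by blast
  have exp: "(\<Prod>k<n. (\<Sum>S\<in>Ind. w S * indicator S (xs ! k)))
        = (\<Sum>g\<in>F. (\<Prod>k<n. w (g k)) * (\<Prod>k<n. indicator (g k) (xs ! k)))" for xs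
    unfolding F_def by (subst prod_sum_PiE) (auto simp: fI prod.distrib)
  have inner: "(\<Sum>xs\<in>C. (\<Prod>k<n. indicator (g k) (xs ! k) :: real)) \<le> 1" if g: "g \<in> F" for g
  proof -
    define A where "A = {xs\<in>C. \<forall>k<n. xs ! k \<in> g k}"
    have "(\<Prod>k<n. indicator (g k) (xs ! k) :: real) = (if xs \<in> A then 1 else 0)" if xC: "xs \<in> C" for xs
    proof (cases "xs \<in> A")
      case True then show ?thesis by (auto simp: A_def indicator_def)
    next
      case False
      then obtain k where "k < n" "xs ! k \<notin> g k" using xC unfolding A_def by auto
      then have "(\<Prod>k<n. indicator (g k) (xs ! k) :: real) = 0"
        by (intro prod_zero) (auto intro!: bexI[of _ k])
      then show ?thesis using False by simp
    qed
    then have "(\<Sum>xs\<in>C. (\<Prod>k<n. indicator (g k) (xs ! k) :: real)) = (\<Sum>xs\<in>C. if xs \<in> A then 1 else 0)"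
      by (intro sum.cong) auto
    also have "\<dots> = real (card A)"
      using fC by (simp add: sum.If_cases A_def Int_def conj_commute)
    also have "card A \<le> Suc 0"
    proof -
      have "finite A" using fC unfolding A_def by auto
      moreover have "\<forall>a1\<in>A. \<forall>a2\<in>A. a1 = a2"
      proof (intro ballI, rule ccontr)
        fix a1 a2 assume a: "a1 \<in> A" "a2 \<in> A" "a1 \<noteq> a2"
        then have "or_pow_adj E a1 a2" using cl unfolding is_clique_def A_def by auto
        then obtain k where k: "k < min (length a1) (length a2)" "E (a1 ! k) (a2 ! k)"
          unfolding or_pow_adj_def by auto
        have "k < n" using k(1) a CV verts_len unfolding A_def by fastforce
        then have "a1 ! k \<in> g k" "a2 ! k \<in> g k" using a unfolding A_def by auto
        moreover have "indep m E (g k)" using g \<open>k < n\<close> unfolding F_def Ind_def by auto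
        ultimately show False using k(2) unfolding indep_def by auto
      qed
      ultimately show ?thesis by (simp add: card_le_Suc0_iff_eq)
    qed
    finally show ?thesis by simp
  qed
  have "(\<Sum>xs\<in>C. \<Prod>k<n. (\<Sum>S\<in>Ind. w S * indicator S (xs ! k)))
      = (\<Sum>g\<in>F. (\<Prod>k<n. w (g k)) * (\<Sum>xs\<in>C. \<Prod>k<n. indicator (g k) (xs ! k)))"
    by (simp add: exp sum.swap[of _ C] sum_distrib_left)
  also have "\<dots> \<le> (\<Sum>g\<in>F. (\<Prod>k<n. w (g k)) * 1)"
  proof (intro sum_mono mult_left_mono inner)
    fix g assume "g \<in> F"
    then show "0 \<le> (\<Prod>k<n. w (g k))" using w0 unfolding F_def Ind_def
      by (intro prod_nonneg) auto
  qed
  also have "\<dots> = (\<Prod>k<n. \<Sum>S\<in>Ind. w S)"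
    unfolding F_def by (subst prod_sum_PiE) (auto simp: fI)
  also have "\<dots> = 1" using w1 unfolding Ind_def by simp
  finally show ?thesis unfolding Ind_def .
qed

theorem lemma3:
  fixes m :: nat and E :: "nat \<Rightarrow> nat \<Rightarrow> bool" and p :: "nat \<Rightarrow> real"
  assumes "simple_graph m E"
    and "in_STAB m E p \<or> in_TH m E p"
  shows "\<forall>n\<ge>1. tensor_pow p \<in> QSTAB (or_pow_verts m n) (or_pow_adj E)"
proof (intro allI impI)
  fix n :: nat assume "n \<ge> 1"
  have pb: "\<forall>i\<in>{1..m}. 0 \<le> p i \<and> p i \<le> 1"
    using assms(2)
  proof
    assume "in_STAB m E p"
    then obtain w where w0: "\<forall>S. indep m E S \<longrightarrow> 0 \<le> w S"
      and w1: "(\<Sum>S\<in>{S. indep m E S}. w S) = 1"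
      and wp: "\<forall>i\<in>{1..m}. p i = (\<Sum>S\<in>{S. indep m E S}. w S * indicator S i)"
      unfolding in_STAB_def by blast
    show ?thesis
    proof
      fix i assume i: "i \<in> {1..m}"
      have "0 \<le> (\<Sum>S\<in>{S. indep m E S}. w S * indicator S i)"
        using w0 by (intro sum_nonneg) auto
      moreover have "(\<Sum>S\<in>{S. indep m E S}. w S * indicator S i) \<le> (\<Sum>S\<in>{S. indep m E S}. w S)"
        using w0 by (intro sum_mono) (auto simp: indicator_def)
      ultimately show "0 \<le> p i \<and> p i \<le> 1" using wp i w1 by simp
    qed
  next
    assume "in_TH m E p" then show ?thesis unfolding in_TH_def by blast
  qed
  have vb: "0 \<le> tensor_pow p v \<and> tensor_pow p v \<le> 1" if v: "v \<in> or_pow_verts m n" for v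
    using pb verts_nth[OF v] unfolding tp_eq[OF v]
    by (auto intro!: prod_nonneg prod_le_1)
  have cb: "(\<Sum>v\<in>C. tensor_pow p v) \<le> 1" if cl: "is_clique (or_pow_verts m n) (or_pow_adj E) C" for C
  proof -
    have CV: "C \<subseteq> or_pow_verts m n" using cl unfolding is_clique_def by auto
    show ?thesis using assms(2)
    proof
      assume "in_STAB m E p"
      then obtain w where w0: "\<forall>S. indep m E S \<longrightarrow> 0 \<le> w S"
        and w1: "(\<Sum>S\<in>{S. indep m E S}. w S) = 1"
        and wp: "\<forall>i\<in>{1..m}. p i = (\<Sum>S\<in>{S. indep m E S}. w S * indicator S i)"
        unfolding in_STAB_def by blast
      have "(\<Sum>v\<in>C. tensor_pow p v) = (\<Sum>xs\<in>C. \<Prod>k<n. (\<Sum>S\<in>{S. indep m E S}. w S * indicator S (xs ! k)))"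
        using CV wp verts_nth by (intro sum.cong refl) (auto simp: tp_eq intro!: prod.cong)
      also have "\<dots> \<le> 1" by (rule stab_clique[OF assms(1) w0 w1 cl])
      finally show ?thesis .
    next
      assume "in_TH m E p"
      then obtain d \<psi> u where psi: "cinner d \<psi> \<psi> = 1"
        and u1: "\<forall>i\<in>{1..m}. cinner d (u i) (u i) = 1"
        and u0: "\<forall>i\<in>{1..m}. \<forall>j\<in>{1..m}. E i j \<longrightarrow> cinner d (u i) (u j) = 0"
        and up: "\<forall>i\<in>{1..m}. p i = (cmod (cinner d (u i) \<psi>))\<^sup>2"
        unfolding in_TH_def by blast
      have "(\<Sum>v\<in>C. tensor_pow p v) = (\<Sum>xs\<in>C. \<Prod>k<n. (cmod (cinner d (u (xs ! k)) \<psi>))\<^sup>2)"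
        using CV up verts_nth by (intro sum.cong refl) (auto simp: tp_eq intro!: prod.cong)
      also have "\<dots> \<le> 1" by (rule th_clique[OF psi u1 u0 cl])
      finally show ?thesis .
    qed
  qed
  show "tensor_pow p \<in> QSTAB (or_pow_verts m n) (or_pow_adj E)"
    unfolding QSTAB_def using vb cb by blast
qed

end
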